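(* Let $P$ be a $K\times K$ substochastic matrix with $\rho(P)<1$, and let $\mu,\lambda,N\in\mathbb{R}_+^K$. Consider the linear network $\mathbf{N}^{(i)}(t)=N^{(i)}+\lambda^{(i)}t$, $\mathbf{S}^{(i)}(t)=\mu^{(i)}t$, $\mathbf{P}^{(i,j)}(t)=P^{(i,j)}t$. Then the fixed point equation $\mathbf{A}=\Gamma(\mathbf{D},\mathbf{P},\mathbf{N})$, $\mathbf{D}=\Phi(\mathbf{A},\mathbf{S})$ has a unique solution $(\mathbf{A},\mathbf{D})\in\mathbb{D}(\mathbb{R}_+^K)\times\mathbb{D}_0(\mathbb{R}_+^K)$, given by $\mathbf{A}(t)=x(\mu t,P,N+\lambda t)$ and $\mathbf{D}^{(i)}(t)=\mathbf{A}^{(i)}(t)\wedge\mu^{(i)}t$.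
   Context: $\mathbb{D}(\mathbb{R}_+^K)$: càdlàg componentwise non-decreasing functions $\mathbb{R}_+\to\mathbb{R}_+^K$; $\mathbb{D}_0$: those vanishing at $0$. $\rho$ denotes the spectral radius. For $X\in\mathbb{D}_0(\mathbb{R}_+^K)$, $\mathbf{P}=(\mathbf{P}^{(i,j)})$ with $\mathbf{P}^{(i,j)}\in\mathbb{D}_0(\mathbb{R}_+)$, and $\mathbf{N}\in\mathbb{D}(\mathbb{R}_+^K)$: $\Gamma(X,\mathbf{P},\mathbf{N})^{(i)}(t)=\mathbf{N}^{(i)}(t)+\sum_{j=1}^K\mathbf{P}^{(j,i)}(X^{(j)}(t))$. For $X\in\mathbb{D}(\mathbb{R}_+^K)$, $Y\in\mathbb{D}_0(\mathbb{R}_+^K)$: $\Phi(X,Y)^{(i)}(t)=\inf_{0\le s\le t}\{Y^{(i)}(t)-Y^{(i)}(s)+X^{(i)}(s)\}\wedge Y^{(i)}(t)$. For a substochastic $P$ with $\rho(P)<1$ and $(\alpha,y)\in\mathbb{R}_+^{2K}$, $x(y,P,\alpha)\in\mathbb{R}_+^K$ denotes the unique solution of $x^{(i)}=\alpha^{(i)}+\sum_{j=1}^KP^{(j,i)}(x^{(j)}\wedge y^{(j)})$, $1\le i\le K$ (this solution exists, is unique, and is continuous and non-decreasing in $(y,\alpha)$). Here $\mu t$ denotes the vector $(\mu^{(i)}t)_i$. *)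

theory Defs
  imports "Jordan_Normal_Form.Spectral_Radius"
begin

(* Time domain R_+ is represented by real numbers t with t >= 0; values of
   paths at negative times are irrelevant.  Vectors in R_+^K are functions
   nat => real, of which only indices i < K matter. *)

definition cadlag1 :: "(real \<Rightarrow> real) \<Rightarrow> bool" where
  "cadlag1 f \<longleftrightarrow> (\<forall>t\<ge>0. continuous (at_right t) f) \<and>
                   (\<forall>t>0. \<exists>l. (f \<longlongrightarrow> l) (at_left t))"

definition D1 :: "(real \<Rightarrow> real) set" where
  "D1 = {f. cadlag1 f \<and> (\<forall>s t. 0 \<le> s \<longrightarrow> s \<le> t \<longrightarrow> f s \<le> f t) \<and> (\<forall>t\<ge>0. 0 \<le> f t)}"

definition D0_1 :: "(real \<Rightarrow> real) set" where
  "D0_1 = {f. f \<in> D1 \<and> f 0 = 0}"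

definition DK :: "nat \<Rightarrow> (real \<Rightarrow> nat \<Rightarrow> real) set" where
  "DK K = {X. \<forall>i<K. (\<lambda>t. X t i) \<in> D1}"

definition D0K :: "nat \<Rightarrow> (real \<Rightarrow> nat \<Rightarrow> real) set" where
  "D0K K = {X. \<forall>i<K. (\<lambda>t. X t i) \<in> D0_1}"

definition Gamma :: "nat \<Rightarrow> (real \<Rightarrow> nat \<Rightarrow> real) \<Rightarrow> (nat \<Rightarrow> nat \<Rightarrow> real \<Rightarrow> real)
                     \<Rightarrow> (real \<Rightarrow> nat \<Rightarrow> real) \<Rightarrow> real \<Rightarrow> nat \<Rightarrow> real" where
  "Gamma K X PP NN t i = NN t i + (\<Sum>j<K. PP j i (X t j))"

definition Phi :: "(real \<Rightarrow> nat \<Rightarrow> real) \<Rightarrow> (real \<Rightarrow> nat \<Rightarrow> real) \<Rightarrow> real \<Rightarrow> nat \<Rightarrow> real" where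
  "Phi X Y t i = min (INF s\<in>{0..t}. Y t i - Y s i + X s i) (Y t i)"

definition substochastic :: "nat \<Rightarrow> real mat \<Rightarrow> bool" where
  "substochastic K P \<longleftrightarrow> P \<in> carrier_mat K K \<and>
     (\<forall>i<K. \<forall>j<K. 0 \<le> P $$ (i,j)) \<and> (\<forall>i<K. (\<Sum>j<K. P $$ (i,j)) \<le> 1)"

definition xsol :: "nat \<Rightarrow> (nat \<Rightarrow> real) \<Rightarrow> real mat \<Rightarrow> (nat \<Rightarrow> real) \<Rightarrow> (nat \<Rightarrow> real)" where
  "xsol K y P \<alpha> = (THE x. (\<forall>i. K \<le> i \<longrightarrow> x i = 0) \<and> (\<forall>i<K. 0 \<le> x i) \<and>
      (\<forall>i<K. x i = \<alpha> i + (\<Sum>j<K. P $$ (j,i) * min (x j) (y j))))"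

end

theory Submission
  imports Defs
begin

definition lyap :: "nat \<Rightarrow> real mat \<Rightarrow> (nat \<Rightarrow> real) \<Rightarrow> bool" where
  "lyap K P v \<longleftrightarrow> (\<forall>i<K. \<forall>j<K. 0 \<le> P $$ (i,j)) \<and> (\<forall>i<K. 1 \<le> v i) \<and>
     (\<forall>i<K. (\<Sum>j<K. P $$ (j,i) * v j) \<le> v i - 1/2)"

lemma key:
  assumes L: "lyap K P v"
    and d: "\<forall>i<K. d i \<le> (\<Sum>j<K. P $$ (j,i) * d j) + e" and e: "0 \<le> e"
  shows "\<forall>i<K. d i \<le> 2*e*v i"
proof (cases "K = 0")
  case True then show ?thesis by simp
next
  case False
  have Pnn: "\<And>i j. i<K \<Longrightarrow> j<K \<Longrightarrow> 0 \<le> P $$ (i,j)" and v1: "\<And>i. i<K \<Longrightarrow> 1 \<le> v i"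
    and vP: "\<And>i. i<K \<Longrightarrow> (\<Sum>j<K. P $$ (j,i) * v j) \<le> v i - 1/2"
    using L unfolding lyap_def by auto
  define m where "m = Max ((\<lambda>i. d i / v i) ` {..<K})"
  have fin: "finite ((\<lambda>i. d i / v i) ` {..<K})" by simp
  have ne: "(\<lambda>i. d i / v i) ` {..<K} \<noteq> {}" using False by auto
  obtain i0 where i0: "i0 < K" "m = d i0 / v i0"
    using Max_in[OF fin ne] unfolding m_def by auto
  have dm: "d j \<le> m * v j" if "j < K" for j
  proof -
    have "d j / v j \<le> m" unfolding m_def using fin that by (intro Max_ge) auto
    moreover have "v j > 0" using v1[OF that] by simp
    ultimately show ?thesis by (simp add: divide_le_eq)
  qed
  show ?thesis
  proof (cases "m \<le> 0")
    case True
    show ?thesis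
    proof (intro allI impI)
      fix i assume i: "i < K"
      have "d i \<le> m * v i" by (rule dm[OF i])
      also have "\<dots> \<le> 0" using True v1[OF i] by (simp add: mult_nonpos_nonneg)
      also have "0 \<le> 2 * e * v i" using e v1[OF i] by simp
      finally show "d i \<le> 2 * e * v i" .
    qed
  next
    case False
    have vi0: "v i0 > 0" using v1[OF i0(1)] by simp
    have "m * v i0 = d i0" using i0 vi0 by simp
    also have "\<dots> \<le> (\<Sum>j<K. P $$ (j,i0) * d j) + e" using d i0 by auto
    also have "(\<Sum>j<K. P $$ (j,i0) * d j) \<le> (\<Sum>j<K. P $$ (j,i0) * (m * v j))"
      by (intro sum_mono mult_left_mono dm Pnn i0) auto
    also have "\<dots> = m * (\<Sum>j<K. P $$ (j,i0) * v j)" by (simp add: sum_distrib_left algebra_simps)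
    also have "\<dots> \<le> m * (v i0 - 1/2)" using False vP[OF i0(1)] by (intro mult_left_mono) auto
    finally have "m \<le> 2 * e" by (simp add: algebra_simps)
    show ?thesis
    proof (intro allI impI)
      fix i assume i: "i < K"
      have "d i \<le> m * v i" by (rule dm[OF i])
      also have "\<dots> \<le> 2 * e * v i" using \<open>m \<le> 2*e\<close> v1[OF i] by (intro mult_right_mono) auto
      finally show "d i \<le> 2 * e * v i" .
    qed
  qed
qed

lemma min_diff_le: "min (a::real) b - min c d' \<le> max (a - c) 0 + max (b - d') 0"
  by (simp add: min_def max_def)

lemma compare:
  assumes L: "lyap K P v"
    and g: "\<forall>i<K. g i \<le> \<alpha> i + (\<Sum>j<K. P $$ (j,i) * min (g j) (y j))"
    and x: "\<forall>i<K. x i \<ge> \<alpha>' i + (\<Sum>j<K. P $$ (j,i) * min (x j) (y' j))"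
    and le: "\<forall>i<K. \<alpha> i \<le> \<alpha>' i \<and> y i \<le> y' i"
  shows "\<forall>i<K. g i \<le> x i"
proof -
  have Pnn: "\<And>i j. i<K \<Longrightarrow> j<K \<Longrightarrow> 0 \<le> P $$ (i,j)"
    using L unfolding lyap_def by auto
  define d where "d i = max (g i - x i) 0" for i
  have "\<forall>i<K. d i \<le> (\<Sum>j<K. P $$ (j,i) * d j) + 0"
  proof (intro allI impI)
    fix i assume i: "i < K"
    have s0: "0 \<le> (\<Sum>j<K. P $$ (j,i) * d j)"
      by (intro sum_nonneg mult_nonneg_nonneg Pnn i) (auto simp: d_def)
    show "d i \<le> (\<Sum>j<K. P $$ (j,i) * d j) + 0"
    proof (cases "g i \<le> x i")
      case True then show ?thesis using s0 by (simp add: d_def)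
    next
      case False
      have "d i = g i - x i" using False by (simp add: d_def)
      also have "\<dots> \<le> (\<alpha> i + (\<Sum>j<K. P $$ (j,i) * min (g j) (y j))) - (\<alpha>' i + (\<Sum>j<K. P $$ (j,i) * min (x j) (y' j)))"
        using g x i by (auto intro: diff_mono)
      also have "\<dots> \<le> (\<Sum>j<K. P $$ (j,i) * min (g j) (y j)) - (\<Sum>j<K. P $$ (j,i) * min (x j) (y' j))"
        using le i by auto
      also have "\<dots> = (\<Sum>j<K. P $$ (j,i) * (min (g j) (y j) - min (x j) (y' j)))"
        by (simp add: sum_subtractf algebra_simps)
      also have "\<dots> \<le> (\<Sum>j<K. P $$ (j,i) * d j)"
      proof (intro sum_mono mult_left_mono)
        fix j assume j: "j \<in> {..<K}"
        show "min (g j) (y j) - min (x j) (y' j) \<le> d j"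
          using le j unfolding d_def by (auto simp: min_def max_def)
        show "0 \<le> P $$ (j,i)" using Pnn j i by auto
      qed
      finally show ?thesis by simp
    qed
  qed
  from key[OF L this] have "\<forall>i<K. d i \<le> 0" by simp
  then show ?thesis by (auto simp: d_def)
qed

definition issol :: "nat \<Rightarrow> (nat \<Rightarrow> real) \<Rightarrow> real mat \<Rightarrow> (nat \<Rightarrow> real) \<Rightarrow> (nat \<Rightarrow> real) \<Rightarrow> bool" where
  "issol K y P \<alpha> x \<longleftrightarrow> (\<forall>i. K \<le> i \<longrightarrow> x i = 0) \<and> (\<forall>i<K. 0 \<le> x i) \<and>
      (\<forall>i<K. x i = \<alpha> i + (\<Sum>j<K. P $$ (j,i) * min (x j) (y j)))"

lemma xsol_issol_def: "xsol K y P \<alpha> = (THE x. issol K y P \<alpha> x)"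
  unfolding xsol_def issol_def by simp

lemma eqle1: "\<forall>i<K. a i = (b i::real) \<Longrightarrow> \<forall>i<K. a i \<le> b i" by simp
lemma eqle2: "\<forall>i<K. a i = (b i::real) \<Longrightarrow> \<forall>i<K. a i \<ge> b i" by simp

lemma issol_unique:
  assumes L: "lyap K P v" and x: "issol K y P \<alpha> x" and x': "issol K y P \<alpha> x'"
  shows "x = x'"
proof
  fix i
  show "x i = x' i"
  proof (cases "i < K")
    case True
    have e1: "\<forall>i<K. x i = \<alpha> i + (\<Sum>j<K. P $$ (j,i) * min (x j) (y j))"
      and e2: "\<forall>i<K. x' i = \<alpha> i + (\<Sum>j<K. P $$ (j,i) * min (x' j) (y j))"
      using x x' unfolding issol_def by blast+
    have "\<forall>i<K. x i \<le> x' i" by (rule compare[OF L eqle1[OF e1] eqle2[OF e2]]) simp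
    moreover have "\<forall>i<K. x' i \<le> x i" by (rule compare[OF L eqle1[OF e2] eqle2[OF e1]]) simp
    ultimately show ?thesis using True by force
  next
    case False then show ?thesis using x x' by (simp add: issol_def)
  qed
qed

definition Fm :: "nat \<Rightarrow> (nat \<Rightarrow> real) \<Rightarrow> real mat \<Rightarrow> (nat \<Rightarrow> real) \<Rightarrow> (nat \<Rightarrow> real) \<Rightarrow> (nat \<Rightarrow> real)" where
  "Fm K y P \<alpha> x = (\<lambda>i. if i < K then \<alpha> i + (\<Sum>j<K. P $$ (j,i) * min (x j) (y j)) else 0)"

lemma issol_exists:
  assumes L: "lyap K P v" and a: "\<forall>i<K. 0 \<le> \<alpha> i" and y: "\<forall>i<K. 0 \<le> y i"
  shows "\<exists>x. issol K y P \<alpha> x"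
proof -
  have Pnn: "\<And>i j. i<K \<Longrightarrow> j<K \<Longrightarrow> 0 \<le> P $$ (i,j)" and v1: "\<And>i. i<K \<Longrightarrow> 1 \<le> v i"
    and vP: "\<And>i. i<K \<Longrightarrow> (\<Sum>j<K. P $$ (j,i) * v j) \<le> v i - 1/2"
    using L unfolding lyap_def by auto
  define xs where "xs n = (Fm K y P \<alpha> ^^ n) (\<lambda>_. 0)" for n
  have xs_Suc: "xs (Suc n) = Fm K y P \<alpha> (xs n)" for n by (simp add: xs_def)
  define R where "R = 2 * (\<Sum>i<K. \<alpha> i)"
  have aR: "\<alpha> i \<le> R / 2" if "i < K" for i
  proof -
    have "\<alpha> i \<le> (\<Sum>i<K. \<alpha> i)" using a that by (intro member_le_sum) auto
    then show ?thesis by (simp add: R_def)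
  qed
  have R0: "0 \<le> R" unfolding R_def using a by (intro mult_nonneg_nonneg sum_nonneg) auto
  have mono_F: "\<forall>i<K. Fm K y P \<alpha> x i \<le> Fm K y P \<alpha> x' i" if "\<forall>j<K. x j \<le> x' j" for x x'
    using that unfolding Fm_def
    by (auto intro!: sum_mono mult_left_mono Pnn)
  have inc: "\<forall>i<K. xs n i \<le> xs (Suc n) i" for n
  proof (induction n)
    case 0
    show ?case using a y unfolding xs_def Fm_def
      by (auto intro!: add_nonneg_nonneg sum_nonneg mult_nonneg_nonneg Pnn)
  next
    case (Suc n)
    then show ?case unfolding xs_Suc[of "Suc n"] xs_Suc[of n] by (rule mono_F)
  qed
  have bnd: "\<forall>i<K. xs n i \<le> R * v i" for n
  proof (induction n)
    case 0
    show ?case using R0 v1 by (auto simp: xs_def) (meson dual_order.trans mult_nonneg_nonneg zero_le_one)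
  next
    case (Suc n)
    show ?case
    proof (intro allI impI)
      fix i assume i: "i < K"
      have "xs (Suc n) i = \<alpha> i + (\<Sum>j<K. P $$ (j,i) * min (xs n j) (y j))"
        using i by (simp add: xs_Suc Fm_def)
      also have "\<dots> \<le> \<alpha> i + (\<Sum>j<K. P $$ (j,i) * (R * v j))"
        using Suc.IH i by (intro add_left_mono sum_mono mult_left_mono Pnn) auto
      also have "\<dots> = \<alpha> i + R * (\<Sum>j<K. P $$ (j,i) * v j)"
        by (simp add: sum_distrib_left algebra_simps)
      also have "\<dots> \<le> \<alpha> i + R * (v i - 1/2)"
        using vP[OF i] R0 by (intro add_left_mono mult_left_mono) auto
      also have "\<dots> \<le> R * v i" using aR[OF i] by (simp add: algebra_simps)
      finally show "xs (Suc n) i \<le> R * v i" .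
    qed
  qed
  have conv: "\<exists>l. (\<lambda>n. xs n i) \<longlonglongrightarrow> l" if i: "i < K" for i
  proof -
    have "incseq (\<lambda>n. xs n i)" using inc i by (intro incseq_SucI) auto
    moreover have "\<forall>n. xs n i \<le> R * v i" using bnd i by auto
    ultimately show ?thesis using incseq_convergent by blast
  qed
  define x where "x i = (if i < K then lim (\<lambda>n. xs n i) else 0)" for i
  have lx: "(\<lambda>n. xs n i) \<longlonglongrightarrow> x i" if "i < K" for i
    using conv[OF that] that unfolding x_def by (auto simp: convergent_LIMSEQ_iff[symmetric] convergent_def)
  have nn: "\<forall>i<K. 0 \<le> xs n i" for n
  proof (induction n)
    case 0 then show ?case by (simp add: xs_def)
  next
    case (Suc n) then show ?case using inc[of n] by force
  qed
  have "issol K y P \<alpha> x"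
    unfolding issol_def
  proof (intro conjI allI impI)
    fix i assume "K \<le> i" then show "x i = 0" by (simp add: x_def)
  next
    fix i assume i: "i < K"
    show "0 \<le> x i" using lx[OF i] nn i by (intro LIMSEQ_le_const) auto
  next
    fix i assume i: "i < K"
    have "(\<lambda>n. xs (Suc n) i) \<longlonglongrightarrow> x i" using lx[OF i] by (rule LIMSEQ_Suc)
    moreover have "(\<lambda>n. xs (Suc n) i) \<longlonglongrightarrow> \<alpha> i + (\<Sum>j<K. P $$ (j,i) * min (x j) (y j))"
      unfolding xs_Suc Fm_def using i
      by (simp, intro tendsto_intros lx) auto
    ultimately show "x i = \<alpha> i + (\<Sum>j<K. P $$ (j,i) * min (x j) (y j))"
      by (rule LIMSEQ_unique)
  qed
  then show ?thesis by blast
qed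

lemma xsol_issol:
  assumes L: "lyap K P v" and a: "\<forall>i<K. 0 \<le> \<alpha> i" and y: "\<forall>i<K. 0 \<le> y i"
  shows "issol K y P \<alpha> (xsol K y P \<alpha>)"
proof -
  obtain x where x: "issol K y P \<alpha> x" using issol_exists[OF L a y] by blast
  show ?thesis unfolding xsol_issol_def
    by (rule theI[of _ x]) (use x issol_unique[OF L] in blast)+
qed

lemma sr_smult:
  fixes C :: "complex mat" and c :: real
  assumes CK: "C \<in> carrier_mat K K" and K: "0 < K" and c: "0 < c"
  shows "spectral_radius (complex_of_real c \<cdot>\<^sub>m C) \<le> c * spectral_radius C"
proof -
  have cC: "complex_of_real c \<cdot>\<^sub>m C \<in> carrier_mat K K" using CK by simp
  from spectral_radius_mem_max(1)[OF cC K] obtain ev where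
    ev: "ev \<in> spectrum (complex_of_real c \<cdot>\<^sub>m C)" and eq: "spectral_radius (complex_of_real c \<cdot>\<^sub>m C) = norm ev"
    by auto
  from ev obtain w where w: "eigenvector (complex_of_real c \<cdot>\<^sub>m C) w ev"
    unfolding spectrum_def eigenvalue_def by auto
  have wc: "w \<in> carrier_vec K" and wn: "w \<noteq> 0\<^sub>v K" and we: "(complex_of_real c \<cdot>\<^sub>m C) *\<^sub>v w = ev \<cdot>\<^sub>v w"
    using w CK unfolding eigenvector_def by auto
  have cne: "complex_of_real c \<noteq> 0" using c by simp
  have "C *\<^sub>v w = (ev / complex_of_real c) \<cdot>\<^sub>v w"
  proof (rule eq_vecI)
    fix i assume "i < dim_vec ((ev / complex_of_real c) \<cdot>\<^sub>v w)"
    then have i: "i < K" using wc by simp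
    have "((complex_of_real c \<cdot>\<^sub>m C) *\<^sub>v w) $ i = complex_of_real c * (row C i \<bullet> w)"
      using i CK wc by simp
    moreover have "(ev \<cdot>\<^sub>v w) $ i = ev * w $ i" using i wc by simp
    ultimately have "complex_of_real c * (row C i \<bullet> w) = ev * w $ i" using we by simp
    then have "row C i \<bullet> w = ev / complex_of_real c * w $ i" using cne
      by (simp add: field_simps)
    then show "(C *\<^sub>v w) $ i = ((ev / complex_of_real c) \<cdot>\<^sub>v w) $ i" using i CK wc by simp
  qed (use CK wc in simp)
  then have "eigenvector C w (ev / complex_of_real c)" using wc wn CK unfolding eigenvector_def by simp
  then have "norm (ev / complex_of_real c) \<in> norm ` spectrum C"
    unfolding spectrum_def eigenvalue_def by auto
  from spectral_radius_mem_max(2)[OF CK K this]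
  have "norm ev / c \<le> spectral_radius C" using c by (simp add: norm_divide)
  then show ?thesis using eq c by (simp add: divide_le_eq mult.commute)
qed

lemma smult_smult_mat: "(a::'a::comm_ring) \<cdot>\<^sub>m (b \<cdot>\<^sub>m A) = (a * b) \<cdot>\<^sub>m A"
  by (rule eq_matI) (auto simp: mult.assoc)

lemma pow_smult_map:
  fixes P :: "real mat" and c :: real
  assumes PK: "P \<in> carrier_mat K K"
  shows "(complex_of_real c \<cdot>\<^sub>m map_mat complex_of_real P) ^\<^sub>m k
     = complex_of_real (c ^ k) \<cdot>\<^sub>m map_mat complex_of_real (P ^\<^sub>m k)"
proof (induction k)
  case 0
  show ?case using PK by (intro eq_matI) auto
next
  case (Suc k)
  have M: "map_mat complex_of_real (P ^\<^sub>m k) \<in> carrier_mat K K" using PK by simp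
  have M1: "map_mat complex_of_real P \<in> carrier_mat K K" using PK by simp
  have "(complex_of_real c \<cdot>\<^sub>m map_mat complex_of_real P) ^\<^sub>m Suc k
     = (complex_of_real (c ^ k) \<cdot>\<^sub>m map_mat complex_of_real (P ^\<^sub>m k)) * (complex_of_real c \<cdot>\<^sub>m map_mat complex_of_real P)"
    using Suc by simp
  also have "\<dots> = complex_of_real (c ^ k) \<cdot>\<^sub>m (complex_of_real c \<cdot>\<^sub>m (map_mat complex_of_real (P ^\<^sub>m k) * map_mat complex_of_real P))"
    using mult_smult_assoc_mat[OF M smult_carrier_mat[OF M1], of "complex_of_real (c ^ k)" "complex_of_real c"]
      mult_smult_distrib[OF M M1, of "complex_of_real c"] by simp
  also have "map_mat complex_of_real (P ^\<^sub>m k) * map_mat complex_of_real P = map_mat complex_of_real (P ^\<^sub>m Suc k)"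
    using of_real_hom.mat_hom_mult[OF pow_carrier_mat[OF PK, of k] PK, where 'a=complex] by (metis pow_mat.simps(2))
  finally show ?case by (simp add: smult_smult_mat mult.commute)
qed

lemma pow_entry_bound:
  fixes P :: "real mat"
  assumes PK: "P \<in> carrier_mat K K" and rho: "spectral_radius (map_mat complex_of_real P) < 1"
    and K: "0 < K"
  shows "\<exists>c B. 1 < c \<and> (\<forall>k i j. i < K \<longrightarrow> j < K \<longrightarrow> \<bar>(P ^\<^sub>m k) $$ (i,j)\<bar> \<le> B / c ^ k)"
proof -
  define C where "C = map_mat complex_of_real P"
  have CK: "C \<in> carrier_mat K K" using PK by (simp add: C_def)
  define m where "m = max (spectral_radius C) 0"
  have m0: "0 \<le> m" and m1: "m < 1" using rho by (auto simp: m_def C_def)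
  define c where "c = 2 / (1 + m)"
  have c1: "1 < c" using m0 m1 by (simp add: c_def field_simps)
  have "spectral_radius (complex_of_real c \<cdot>\<^sub>m C) \<le> c * spectral_radius C"
    by (rule sr_smult[OF CK K]) (use c1 in simp)
  also have "\<dots> \<le> c * m" using c1 by (intro mult_left_mono) (auto simp: m_def)
  also have "c * m < 1" using m0 m1 by (simp add: c_def field_simps)
  finally have sr: "spectral_radius (complex_of_real c \<cdot>\<^sub>m C) < 1" .
  have cCK: "complex_of_real c \<cdot>\<^sub>m C \<in> carrier_mat K K" using CK by simp
  obtain B where B: "\<forall>k. norm_bound ((complex_of_real c \<cdot>\<^sub>m C) ^\<^sub>m k) B"
    using spectral_radius_jnf_norm_bound_less_1_upper_triangular[OF cCK sr] by blast
  have "\<bar>(P ^\<^sub>m k) $$ (i,j)\<bar> \<le> B / c ^ k" if i: "i < K" and j: "j < K" for k i j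
  proof -
    have "norm (((complex_of_real c \<cdot>\<^sub>m C) ^\<^sub>m k) $$ (i,j)) \<le> B"
      using B[rule_format, of k] i j cCK CK unfolding norm_bound_def by auto
    moreover have "((complex_of_real c \<cdot>\<^sub>m C) ^\<^sub>m k) $$ (i,j) = complex_of_real (c ^ k) * complex_of_real ((P ^\<^sub>m k) $$ (i,j))"
      unfolding C_def pow_smult_map[OF PK] using i j PK by simp
    ultimately have "c ^ k * \<bar>(P ^\<^sub>m k) $$ (i,j)\<bar> \<le> B"
      using c1 by (simp add: norm_mult norm_power abs_mult)
    then show ?thesis using c1 by (simp add: field_simps)
  qed
  then show ?thesis using c1 by blast
qed

fun ucol :: "nat \<Rightarrow> real mat \<Rightarrow> nat \<Rightarrow> nat \<Rightarrow> real" where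
  "ucol K P 0 i = 1"
| "ucol K P (Suc k) i = (\<Sum>j<K. P $$ (j,i) * ucol K P k j)"

lemma ucol_pow:
  assumes PK: "P \<in> carrier_mat K K"
  shows "i < K \<Longrightarrow> ucol K P k i = (\<Sum>l<K. (P ^\<^sub>m k) $$ (l,i))"
proof (induction k arbitrary: i)
  case 0
  have "(\<Sum>l<K. (P ^\<^sub>m 0) $$ (l,i)) = (\<Sum>l<K. if l = i then 1 else 0)"
    using PK 0 by (intro sum.cong) auto
  also have "\<dots> = 1" using 0 by simp
  finally show ?case by simp
next
  case (Suc k)
  have "ucol K P (Suc k) i = (\<Sum>j<K. P $$ (j,i) * (\<Sum>l<K. (P ^\<^sub>m k) $$ (l,j)))"
    using Suc.IH by simp
  also have "\<dots> = (\<Sum>j<K. \<Sum>l<K. (P ^\<^sub>m k) $$ (l,j) * P $$ (j,i))"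
    by (simp add: sum_distrib_left mult.commute)
  also have "\<dots> = (\<Sum>l<K. \<Sum>j<K. (P ^\<^sub>m k) $$ (l,j) * P $$ (j,i))"
    by (rule sum.swap)
  also have "\<dots> = (\<Sum>l<K. (P ^\<^sub>m Suc k) $$ (l,i))"
  proof (intro sum.cong refl)
    fix l assume l: "l \<in> {..<K}"
    have "(P ^\<^sub>m Suc k) $$ (l,i) = row (P ^\<^sub>m k) l \<bullet> col P i"
      using l Suc.prems PK by simp
    also have "\<dots> = (\<Sum>j<K. (P ^\<^sub>m k) $$ (l,j) * P $$ (j,i))"
      unfolding scalar_prod_def using l Suc.prems PK
      by (simp add: atLeast0LessThan)
    finally show "(\<Sum>j<K. (P ^\<^sub>m k) $$ (l,j) * P $$ (j,i)) = (P ^\<^sub>m Suc k) $$ (l,i)" by simp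
  qed
  finally show ?case .
qed

lemma ucol_nonneg:
  assumes "\<forall>i<K. \<forall>j<K. 0 \<le> P $$ (i,j)"
  shows "i < K \<Longrightarrow> 0 \<le> ucol K P k i"
  using assms by (induction k arbitrary: i) (auto intro!: sum_nonneg mult_nonneg_nonneg)

lemma lyap_exists:
  fixes P :: "real mat"
  assumes S: "substochastic K P" and rho: "spectral_radius (map_mat complex_of_real P) < 1"
  shows "\<exists>v. lyap K P v"
proof (cases "K = 0")
  case True then show ?thesis by (auto simp: lyap_def)
next
  case False
  have PK: "P \<in> carrier_mat K K" and Pnn: "\<forall>i<K. \<forall>j<K. 0 \<le> P $$ (i,j)"
    using S unfolding substochastic_def by auto
  obtain c B where c1: "1 < c" and B: "\<And>k i j. i < K \<Longrightarrow> j < K \<Longrightarrow> \<bar>(P ^\<^sub>m k) $$ (i,j)\<bar> \<le> B / c ^ k"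
    using pow_entry_bound[OF PK rho] False by blast
  obtain n where n: "2 * (real K * max B 0) < c ^ n" using real_arch_pow[OF c1] by blast
  have cn: "0 < c ^ n" using c1 by simp
  have un: "ucol K P n i \<le> 1/2" if i: "i < K" for i
  proof -
    have "ucol K P n i = (\<Sum>l<K. (P ^\<^sub>m n) $$ (l,i))" by (rule ucol_pow[OF PK i])
    also have "\<dots> \<le> (\<Sum>l<K. max B 0 / c ^ n)"
    proof (intro sum_mono)
      fix l assume "l \<in> {..<K}"
      then have "\<bar>(P ^\<^sub>m n) $$ (l,i)\<bar> \<le> B / c ^ n" using B i by auto
      moreover have "B / c ^ n \<le> max B 0 / c ^ n" using cn by (intro divide_right_mono) auto
      ultimately show "(P ^\<^sub>m n) $$ (l,i) \<le> max B 0 / c ^ n" by linarith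
    qed
    also have "\<dots> = real K * max B 0 / c ^ n" by simp
    also have "\<dots> \<le> 1/2" using n cn by (simp add: field_simps)
    finally show ?thesis .
  qed
  define v where "v i = (\<Sum>k<n. ucol K P k i)" for i
  have "lyap K P v"
    unfolding lyap_def
  proof (intro conjI allI impI)
    show "\<And>i j. i < K \<Longrightarrow> j < K \<Longrightarrow> 0 \<le> P $$ (i,j)" using Pnn by auto
  next
    fix i assume i: "i < K"
    have "n \<noteq> 0"
    proof
      assume "n = 0" then have "ucol K P n i = 1" by simp
      with un[OF i] show False by simp
    qed
    then have "ucol K P 0 i \<le> v i" unfolding v_def using ucol_nonneg[OF Pnn i]
      by (intro member_le_sum) auto
    then show "1 \<le> v i" by simp
  next
    fix i assume i: "i < K"
    have "(\<Sum>j<K. P $$ (j,i) * v j) = (\<Sum>k<n. ucol K P (Suc k) i)"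
      unfolding v_def by (simp add: sum_distrib_left) (rule sum.swap)
    also have "\<dots> = (\<Sum>k<Suc n. ucol K P k i) - ucol K P 0 i"
      by (simp only: sum.lessThan_Suc_shift ucol.simps(1))
    also have "\<dots> = v i + ucol K P n i - 1" by (simp only: sum.lessThan_Suc v_def ucol.simps(1))
    also have "\<dots> \<le> v i - 1/2" using un[OF i] by simp
    finally show "(\<Sum>j<K. P $$ (j,i) * v j) \<le> v i - 1/2" .
  qed
  then show ?thesis by blast
qed

lemma issol_eqs: "issol K y P \<alpha> x \<Longrightarrow> i < K \<Longrightarrow> x i = \<alpha> i + (\<Sum>j<K. P $$ (j,i) * min (x j) (y j))"
  unfolding issol_def by blast

lemma issol_nonneg: "issol K y P \<alpha> x \<Longrightarrow> i < K \<Longrightarrow> 0 \<le> x i"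
  unfolding issol_def by blast

lemma min_abs_diff: "\<bar>min (a::real) b - min c d\<bar> \<le> \<bar>a - c\<bar> + \<bar>b - d\<bar>"
  by (simp add: min_def abs_if)

lemma issol_lip:
  assumes L: "lyap K P v" and x: "issol K y P \<alpha> x" and x': "issol K y' P \<alpha>' x'" and e: "0 \<le> e"
    and ee: "\<forall>i<K. \<bar>\<alpha> i - \<alpha>' i\<bar> + (\<Sum>j<K. P $$ (j,i) * \<bar>y j - y' j\<bar>) \<le> e"
  shows "\<forall>i<K. \<bar>x i - x' i\<bar> \<le> 2 * e * v i"
proof -
  have Pnn: "\<And>i j. i<K \<Longrightarrow> j<K \<Longrightarrow> 0 \<le> P $$ (i,j)"
    using L unfolding lyap_def by auto
  define d where "d i = \<bar>x i - x' i\<bar>" for i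
  have "\<forall>i<K. d i \<le> (\<Sum>j<K. P $$ (j,i) * d j) + e"
  proof (intro allI impI)
    fix i assume i: "i < K"
    have "x i - x' i = (\<alpha> i - \<alpha>' i) + (\<Sum>j<K. P $$ (j,i) * (min (x j) (y j) - min (x' j) (y' j)))"
      using issol_eqs[OF x i] issol_eqs[OF x' i] by (simp add: sum_subtractf algebra_simps)
    then have "d i \<le> \<bar>\<alpha> i - \<alpha>' i\<bar> + \<bar>\<Sum>j<K. P $$ (j,i) * (min (x j) (y j) - min (x' j) (y' j))\<bar>"
      unfolding d_def by linarith
    also have "\<bar>\<Sum>j<K. P $$ (j,i) * (min (x j) (y j) - min (x' j) (y' j))\<bar>
        \<le> (\<Sum>j<K. \<bar>P $$ (j,i) * (min (x j) (y j) - min (x' j) (y' j))\<bar>)" by (rule sum_abs)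
    also have "\<dots> \<le> (\<Sum>j<K. P $$ (j,i) * (d j + \<bar>y j - y' j\<bar>))"
    proof (intro sum_mono)
      fix j assume j: "j \<in> {..<K}"
      have p: "0 \<le> P $$ (j,i)" using Pnn j i by auto
      show "\<bar>P $$ (j,i) * (min (x j) (y j) - min (x' j) (y' j))\<bar> \<le> P $$ (j,i) * (d j + \<bar>y j - y' j\<bar>)"
        unfolding abs_mult using p min_abs_diff[of "x j" "y j" "x' j" "y' j"]
        by (simp add: d_def mult_left_mono)
    qed
    also have "\<dots> = (\<Sum>j<K. P $$ (j,i) * d j) + (\<Sum>j<K. P $$ (j,i) * \<bar>y j - y' j\<bar>)"
      by (simp add: algebra_simps sum.distrib)
    finally show "d i \<le> (\<Sum>j<K. P $$ (j,i) * d j) + e" using ee i by auto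
  qed
  from key[OF L this e] show ?thesis by (simp add: d_def)
qed

lemma lip_tendsto:
  fixes f :: "real \<Rightarrow> real"
  assumes C: "0 \<le> C" and lip: "\<And>x y. 0 \<le> x \<Longrightarrow> 0 \<le> y \<Longrightarrow> \<bar>f x - f y\<bar> \<le> C * \<bar>x - y\<bar>"
    and t: "0 \<le> t" and S: "S \<subseteq> {0..}"
  shows "(f \<longlongrightarrow> f t) (at t within S)"
proof (rule tendstoI)
  fix e :: real assume e: "0 < e"
  show "eventually (\<lambda>x. dist (f x) (f t) < e) (at t within S)"
    unfolding eventually_at
  proof (intro exI[of _ "e / (C + 1)"] conjI ballI impI)
    show "0 < e / (C + 1)" using e C by simp
    fix x assume x: "x \<in> S" and xd: "x \<noteq> t \<and> dist x t < e / (C + 1)"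
    have "dist (f x) (f t) \<le> C * \<bar>x - t\<bar>" using lip[of x t] x S t by (auto simp: dist_real_def)
    also have "\<dots> \<le> C * (e / (C + 1))" using xd C by (intro mult_left_mono) (auto simp: dist_real_def)
    also have "\<dots> < e" using C e by (simp add: field_simps)
    finally show "dist (f x) (f t) < e" .
  qed
qed

lemma lip_cadlag:
  fixes f :: "real \<Rightarrow> real"
  assumes C: "0 \<le> C" and lip: "\<And>x y. 0 \<le> x \<Longrightarrow> 0 \<le> y \<Longrightarrow> \<bar>f x - f y\<bar> \<le> C * \<bar>x - y\<bar>"
  shows "cadlag1 f"
  unfolding cadlag1_def
proof (intro conjI allI impI)
  fix t :: real assume t: "0 \<le> t"
  have "(f \<longlongrightarrow> f t) (at t within {t<..})" by (rule lip_tendsto[OF C lip t]) (use t in auto)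
  then show "continuous (at_right t) f" by (simp add: continuous_within)
next
  fix t :: real assume t: "0 < t"
  have "(f \<longlongrightarrow> f t) (at t within {0..t})" by (rule lip_tendsto[OF C lip]) (use t in auto)
  then have "(f \<longlongrightarrow> f t) (at_left t)" using at_within_Icc_at_left[OF t] by simp
  then show "\<exists>l. (f \<longlongrightarrow> l) (at_left t)" by blast
qed

lemma INF_diff_le:
  fixes f g :: "real \<Rightarrow> real"
  assumes ne: "S \<noteq> {}" and bf: "\<And>s. s \<in> S \<Longrightarrow> 0 \<le> f s" and bg: "\<And>s. s \<in> S \<Longrightarrow> 0 \<le> g s"
    and fg: "\<And>s. s \<in> S \<Longrightarrow> \<bar>f s - g s\<bar> \<le> M"
  shows "\<bar>(INF s\<in>S. f s) - (INF s\<in>S. g s)\<bar> \<le> M"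
proof -
  have bdf: "bdd_below (f ` S)" using bf by (auto intro!: bdd_belowI[of _ 0])
  have bdg: "bdd_below (g ` S)" using bg by (auto intro!: bdd_belowI[of _ 0])
  have 1: "(INF s\<in>S. f s) - M \<le> (INF s\<in>S. g s)"
  proof -
    have "(INF s\<in>S. f s) - M \<le> g s" if s: "s \<in> S" for s
      using cINF_lower[OF bdf s] fg[OF s] by linarith
    then have "(INF s\<in>S. f s) - M \<le> (INF s\<in>S. g s)" by (intro cINF_greatest[OF ne]) auto
    then show ?thesis .
  qed
  have 2: "(INF s\<in>S. g s) - M \<le> (INF s\<in>S. f s)"
  proof -
    have "(INF s\<in>S. g s) - M \<le> f s" if s: "s \<in> S" for s
      using cINF_lower[OF bdg s] fg[OF s] by linarith
    then show ?thesis by (intro cINF_greatest[OF ne]) auto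
  qed
  from 1 2 show ?thesis by linarith
qed

theorem mainTheorem3:
  fixes K :: nat and P :: "real mat" and mu lam N :: "nat \<Rightarrow> real"
  assumes subst: "substochastic K P"
    and rho: "spectral_radius (map_mat complex_of_real P) < 1"
    and nonneg: "\<forall>i<K. 0 \<le> mu i \<and> 0 \<le> lam i \<and> 0 \<le> N i"
  defines "NN \<equiv> (\<lambda>t i. N i + lam i * t)"
    and "SS \<equiv> (\<lambda>t i. mu i * t)"
    and "PP \<equiv> (\<lambda>i j t. P $$ (i,j) * t)"
    and "A0 \<equiv> (\<lambda>t. xsol K (\<lambda>i. mu i * t) P (\<lambda>i. N i + lam i * t))"
    and "D0 \<equiv> (\<lambda>t i. min (xsol K (\<lambda>i. mu i * t) P (\<lambda>i. N i + lam i * t) i) (mu i * t))"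
  shows "A0 \<in> DK K \<and> D0 \<in> D0K K \<and>
         (\<forall>t\<ge>0. \<forall>i<K. A0 t i = Gamma K D0 PP NN t i \<and> D0 t i = Phi A0 SS t i) \<and>
         (\<forall>A D. A \<in> DK K \<and> D \<in> D0K K \<and>
            (\<forall>t\<ge>0. \<forall>i<K. A t i = Gamma K D PP NN t i \<and> D t i = Phi A SS t i)
            \<longrightarrow> (\<forall>t\<ge>0. \<forall>i<K. A t i = A0 t i \<and> D t i = D0 t i))"
proof -
  have Pnn: "\<And>i j. i<K \<Longrightarrow> j<K \<Longrightarrow> 0 \<le> P $$ (i,j)"
    using subst unfolding substochastic_def by auto
  obtain v where L: "lyap K P v" using lyap_exists[OF subst rho] by blast
  have v1: "\<And>i. i<K \<Longrightarrow> 1 \<le> v i" using L unfolding lyap_def by auto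
  have mu0: "\<And>i. i<K \<Longrightarrow> 0 \<le> mu i" and lam0: "\<And>i. i<K \<Longrightarrow> 0 \<le> lam i"
    and N0: "\<And>i. i<K \<Longrightarrow> 0 \<le> N i" using nonneg by auto
  define X where "X t = xsol K (\<lambda>i. mu i * t) P (\<lambda>i. N i + lam i * t)" for t
  have A0X: "A0 = X" unfolding A0_def X_def by (rule ext) simp
  have D0X: "D0 = (\<lambda>t i. min (X t i) (mu i * t))" unfolding D0_def X_def by simp
  have sol: "issol K (\<lambda>i. mu i * t) P (\<lambda>i. N i + lam i * t) (X t)" if t: "0 \<le> t" for t
    unfolding X_def
    by (rule xsol_issol[OF L]) (use t mu0 lam0 N0 in auto)
  have Xall: "\<forall>i<K. X t i = N i + lam i * t + (\<Sum>j<K. P $$ (j,i) * min (X t j) (mu j * t))"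
    if t: "0 \<le> t" for t
    using issol_eqs[OF sol[OF t]] by blast
  have Xeq: "X t i = N i + lam i * t + (\<Sum>j<K. P $$ (j,i) * min (X t j) (mu j * t))"
    if t: "0 \<le> t" and i: "i < K" for t i
    using Xall[OF t] i by blast
  have Xnn: "0 \<le> X t i" if "0 \<le> t" "i < K" for t i
    using issol_nonneg[OF sol] that by blast
  have Xmono: "X s i \<le> X t i" if s: "0 \<le> s" and st: "s \<le> t" and i: "i < K" for s t i
  proof -
    have t: "0 \<le> t" using s st by simp
    have "\<forall>i<K. X s i \<le> X t i"
      by (rule compare[OF L eqle1[OF Xall[OF s]] eqle2[OF Xall[OF t]]])
        (use st mu0 lam0 in \<open>auto intro: mult_left_mono\<close>)
    then show ?thesis using i by blast
  qed
  define Lc where "Lc = (\<Sum>i<K. lam i + (\<Sum>j<K. P $$ (j,i) * mu j))"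
  have Lci: "lam i + (\<Sum>j<K. P $$ (j,i) * mu j) \<le> Lc" if i: "i < K" for i
    unfolding Lc_def using i
    by (intro member_le_sum) (auto intro!: add_nonneg_nonneg sum_nonneg mult_nonneg_nonneg Pnn lam0 mu0)
  have Lc0: "0 \<le> Lc" unfolding Lc_def
    by (intro sum_nonneg add_nonneg_nonneg mult_nonneg_nonneg Pnn lam0 mu0) auto
  have Xlip: "\<bar>X t i - X s i\<bar> \<le> (2 * Lc * v i) * \<bar>t - s\<bar>" if t: "0 \<le> t" and s: "0 \<le> s" and i: "i < K" for s t i
  proof -
    have "\<forall>i<K. \<bar>X t i - X s i\<bar> \<le> 2 * (Lc * \<bar>t - s\<bar>) * v i"
    proof (rule issol_lip[OF L sol[OF t] sol[OF s]])
      show "0 \<le> Lc * \<bar>t - s\<bar>" using Lc0 by simp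
      show "\<forall>i<K. \<bar>N i + lam i * t - (N i + lam i * s)\<bar> + (\<Sum>j<K. P $$ (j, i) * \<bar>mu j * t - mu j * s\<bar>) \<le> Lc * \<bar>t - s\<bar>"
      proof (intro allI impI)
        fix i assume i: "i < K"
        have "\<bar>N i + lam i * t - (N i + lam i * s)\<bar> = lam i * \<bar>t - s\<bar>"
        proof -
          have "N i + lam i * t - (N i + lam i * s) = lam i * (t - s)" by (simp add: algebra_simps)
          then show ?thesis using lam0[OF i] by (simp add: abs_mult)
        qed
        moreover have "(\<Sum>j<K. P $$ (j, i) * \<bar>mu j * t - mu j * s\<bar>) = (\<Sum>j<K. P $$ (j, i) * mu j) * \<bar>t - s\<bar>"
          unfolding sum_distrib_right
        proof (intro sum.cong refl)
          fix j assume "j \<in> {..<K}"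
          then have "0 \<le> mu j" using mu0 by auto
          then show "P $$ (j, i) * \<bar>mu j * t - mu j * s\<bar> = P $$ (j, i) * mu j * \<bar>t - s\<bar>"
            by (simp add: abs_mult flip: right_diff_distrib)
        qed
        ultimately show "\<bar>N i + lam i * t - (N i + lam i * s)\<bar> + (\<Sum>j<K. P $$ (j, i) * \<bar>mu j * t - mu j * s\<bar>) \<le> Lc * \<bar>t - s\<bar>"
          using Lci[OF i] by (simp add: mult_right_mono flip: distrib_right)
      qed
    qed
    then show ?thesis using i by (simp add: mult.commute mult.left_commute)
  qed
  have scale: "(s / t) * X t i \<le> X s i" if s: "0 < s" and st: "s \<le> t" and i: "i < K" for s t i
  proof -
    have t: "0 < t" using s st by simp
    define th where "th = s / t"
    have th0: "0 \<le> th" and th1: "th \<le> 1" and tht: "th * t = s" using s t st by (auto simp: th_def)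
    have mm: "th * min (X t j) (mu j * t) = min (th * X t j) (mu j * s)" for j
    proof -
      have e1: "th * min (X t j) (mu j * t) = min (th * X t j) (th * (mu j * t))"
        using th0 by (simp add: min_mult_distrib_left)
      have e2: "th * (mu j * t) = mu j * s" using tht by (metis mult.left_commute)
      show ?thesis unfolding e1 e2 by (rule refl)
    qed
    have "\<forall>i<K. th * X t i \<le> N i + lam i * s + (\<Sum>j<K. P $$ (j,i) * min (th * X t j) (mu j * s))"
    proof (intro allI impI)
      fix i assume i: "i < K"
      have "th * X t i = th * N i + lam i * (th * t) + (\<Sum>j<K. P $$ (j,i) * (th * min (X t j) (mu j * t)))"
        using Xeq[OF _ i, of t] t by (simp add: algebra_simps sum_distrib_left)
      also have "\<dots> = th * N i + lam i * s + (\<Sum>j<K. P $$ (j,i) * min (th * X t j) (mu j * s))"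
        by (simp only: mm tht)
      also have "\<dots> \<le> N i + lam i * s + (\<Sum>j<K. P $$ (j,i) * min (th * X t j) (mu j * s))"
        using th1 th0 N0[OF i] mult_right_mono[of th 1 "N i"] by simp
      finally show "th * X t i \<le> N i + lam i * s + (\<Sum>j<K. P $$ (j,i) * min (th * X t j) (mu j * s))" .
    qed
    then have "\<forall>i<K. th * X t i \<le> X s i"
      by (rule compare[OF L _ eqle2[OF Xall]]) (use s in auto)
    then show ?thesis using i by (simp add: th_def)
  qed
  have PhiX: "D0 t i = Phi A0 SS t i" if t: "0 \<le> t" and i: "i < K" for t i
  proof -
    define f where "f s = mu i * t - mu i * s + X s i" for s
    have Phi_eq: "Phi A0 SS t i = min (INF s\<in>{0..t}. f s) (mu i * t)"
      unfolding Phi_def SS_def A0X f_def by simp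
    have f0: "0 \<le> f s" if "s \<in> {0..t}" for s
      using that Xnn[of s i] i mu0[OF i] mult_left_mono[of s t "mu i"] by (auto simp: f_def algebra_simps)
    have bdd: "bdd_below (f ` {0..t})" using f0 by (auto intro!: bdd_belowI[of _ 0])
    have low: "min (X t i) (mu i * t) \<le> f s" if s: "s \<in> {0..t}" for s
    proof (cases "mu i * s \<le> X s i")
      case True
      then show ?thesis unfolding f_def by simp
    next
      case False
      show ?thesis
      proof (cases "s = 0")
        case True
        then show ?thesis using Xnn[of 0 i] i by (simp add: f_def)
      next
        case False': False
        have s0: "0 < s" using s False' by auto
        have st: "s \<le> t" using s by auto
        have "(s / t) * X t i \<le> X s i" by (rule scale[OF s0 st i])
        then have "X t i \<le> (t / s) * X s i" using s0 st by (simp add: field_simps)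
        then have "X t i - X s i \<le> ((t - s) / s) * X s i" using s0 by (simp add: field_simps)
        also have "\<dots> \<le> ((t - s) / s) * (mu i * s)" using False st s0
          by (intro mult_left_mono) auto
        also have "\<dots> = (t - s) * mu i" using s0 by simp
        finally have "X t i \<le> f s" unfolding f_def by (simp add: algebra_simps)
        then show ?thesis by simp
      qed
    qed
    have I1: "min (X t i) (mu i * t) \<le> (INF s\<in>{0..t}. f s)"
      by (rule cINF_greatest) (use t low in auto)
    have I2: "(INF s\<in>{0..t}. f s) \<le> X t i"
      using cINF_lower[OF bdd, of t] t by (simp add: f_def)
    show ?thesis unfolding Phi_eq D0X using I1 I2 by linarith
  qed
  have GammaX: "A0 t i = Gamma K D0 PP NN t i" if t: "0 \<le> t" and i: "i < K" for t i
    unfolding Gamma_def PP_def NN_def D0X A0X using Xeq[OF t i] by simp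
  have A0DK: "A0 \<in> DK K"
    unfolding DK_def D1_def A0X
  proof (rule CollectI, intro allI impI, rule CollectI, intro conjI)
    fix i assume i: "i < K"
    show "cadlag1 (\<lambda>t. X t i)"
      by (rule lip_cadlag[of "2 * Lc * v i"]) (use Lc0 v1[OF i] Xlip i in auto)
    show "\<forall>s t. 0 \<le> s \<longrightarrow> s \<le> t \<longrightarrow> X s i \<le> X t i" using Xmono i by blast
    show "\<forall>t\<ge>0. 0 \<le> X t i" using Xnn i by blast
  qed
  have D0DK: "D0 \<in> D0K K"
    unfolding D0K_def D0_1_def D1_def D0X
  proof (rule CollectI, intro allI impI, rule CollectI, intro conjI, rule CollectI, intro conjI)
    fix i assume i: "i < K"
    show "cadlag1 (\<lambda>t. min (X t i) (mu i * t))"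
    proof (rule lip_cadlag[of "2 * Lc * v i + mu i"])
      show "0 \<le> 2 * Lc * v i + mu i" using Lc0 v1[OF i] mu0[OF i] by simp
      fix x y :: real assume x: "0 \<le> x" and y: "0 \<le> y"
      have "\<bar>min (X x i) (mu i * x) - min (X y i) (mu i * y)\<bar> \<le> \<bar>X x i - X y i\<bar> + \<bar>mu i * x - mu i * y\<bar>"
        by (rule min_abs_diff)
      also have "\<bar>mu i * x - mu i * y\<bar> = mu i * \<bar>x - y\<bar>"
        using mu0[OF i] by (simp add: abs_mult flip: right_diff_distrib)
      finally show "\<bar>min (X x i) (mu i * x) - min (X y i) (mu i * y)\<bar> \<le> (2 * Lc * v i + mu i) * \<bar>x - y\<bar>"
        using Xlip[OF x y i] by (simp add: distrib_right)
    qed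
    show "\<forall>s t. 0 \<le> s \<longrightarrow> s \<le> t \<longrightarrow> min (X s i) (mu i * s) \<le> min (X t i) (mu i * t)"
    proof (intro allI impI)
      fix s t :: real assume s: "0 \<le> s" and st: "s \<le> t"
      have "X s i \<le> X t i" using Xmono[OF s st i] .
      moreover have "mu i * s \<le> mu i * t" using mu0[OF i] st by (simp add: mult_left_mono)
      ultimately show "min (X s i) (mu i * s) \<le> min (X t i) (mu i * t)" by (rule min.mono)
    qed
    show "\<forall>t\<ge>0. 0 \<le> min (X t i) (mu i * t)" using Xnn i mu0[OF i] by simp
    show "min (X 0 i) (mu i * 0) = 0" using Xnn[of 0 i] i by simp
  qed
  have uniq: "A t i = A0 t i \<and> D t i = D0 t i"
    if A: "A \<in> DK K" and D: "D \<in> D0K K"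
      and fp: "\<forall>t\<ge>0. \<forall>i<K. A t i = Gamma K D PP NN t i \<and> D t i = Phi A SS t i"
      and t: "0 \<le> t" and i: "i < K" for A D t i
  proof -
    have Amono: "A s j \<le> A r j" if "0 \<le> s" "s \<le> r" "j < K" for s r j
      using A that unfolding DK_def D1_def by blast
    have Ann: "0 \<le> A s j" if "0 \<le> s" "j < K" for s j
      using A that unfolding DK_def D1_def by blast
    define M where "M j = (SUP s\<in>{0..t}. \<bar>A s j - X s j\<bar>)" for j
    have bddM: "bdd_above ((\<lambda>s. \<bar>A s j - X s j\<bar>) ` {0..t})" if j: "j < K" for j
    proof (rule bdd_aboveI[of _ "A t j + X t j"])
      fix y assume "y \<in> (\<lambda>s. \<bar>A s j - X s j\<bar>) ` {0..t}"
      then obtain s where s: "s \<in> {0..t}" and y: "y = \<bar>A s j - X s j\<bar>" by auto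
      have "A s j \<le> A t j" "X s j \<le> X t j" "0 \<le> A s j" "0 \<le> X s j"
        using Amono[of s t j] Xmono[of s t j] Ann[of s j] Xnn[of s j] s j by auto
      then show "y \<le> A t j + X t j" unfolding y by linarith
    qed
    have Mup: "\<bar>A s j - X s j\<bar> \<le> M j" if "s \<in> {0..t}" "j < K" for s j
      unfolding M_def using that bddM by (intro cSUP_upper) auto
    have Dbound: "\<bar>D r j - D0 r j\<bar> \<le> M j" if r: "r \<in> {0..t}" and j: "j < K" for r j
    proof -
      have r0: "0 \<le> r" using r by auto
      have "D r j = Phi A SS r j" using fp r0 j by blast
      moreover have "D0 r j = Phi A0 SS r j" by (rule PhiX[OF r0 j])
      ultimately have "\<bar>D r j - D0 r j\<bar> = \<bar>min (INF s\<in>{0..r}. mu j * r - mu j * s + A s j) (mu j * r)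
          - min (INF s\<in>{0..r}. mu j * r - mu j * s + X s j) (mu j * r)\<bar>"
        unfolding Phi_def SS_def A0X by simp
      also have "\<dots> \<le> \<bar>(INF s\<in>{0..r}. mu j * r - mu j * s + A s j) - (INF s\<in>{0..r}. mu j * r - mu j * s + X s j)\<bar>"
        using min_abs_diff[of "INF s\<in>{0..r}. mu j * r - mu j * s + A s j" "mu j * r"
            "INF s\<in>{0..r}. mu j * r - mu j * s + X s j" "mu j * r"] by simp
      also have "\<dots> \<le> M j"
      proof (rule INF_diff_le)
        show "{0..r} \<noteq> {}" using r0 by simp
        fix s assume s: "s \<in> {0..r}"
        have ms: "0 \<le> mu j * r - mu j * s" using s mu0[OF j]
          by (simp add: mult_left_mono flip: right_diff_distrib)
        show "0 \<le> mu j * r - mu j * s + A s j" using ms Ann[of s j] s j by auto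
        show "0 \<le> mu j * r - mu j * s + X s j" using ms Xnn[of s j] s j by auto
        show "\<bar>mu j * r - mu j * s + A s j - (mu j * r - mu j * s + X s j)\<bar> \<le> M j"
          using Mup[of s j] s r j by auto
      qed
      finally show ?thesis .
    qed
    have Mfix: "\<forall>j<K. M j \<le> (\<Sum>l<K. P $$ (l,j) * M l) + 0"
    proof (intro allI impI)
      fix j assume j: "j < K"
      have "M j \<le> (\<Sum>l<K. P $$ (l,j) * M l)"
        unfolding M_def[of j]
      proof (rule cSUP_least)
        show "{0..t} \<noteq> {}" using t by simp
        fix r assume r: "r \<in> {0..t}"
        have r0: "0 \<le> r" using r by auto
        have "A r j = N j + lam j * r + (\<Sum>l<K. P $$ (l,j) * D r l)"
          using fp r0 j unfolding Gamma_def PP_def NN_def by blast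
        moreover have "X r j = N j + lam j * r + (\<Sum>l<K. P $$ (l,j) * D0 r l)"
          using Xeq[OF r0 j] unfolding D0X by simp
        ultimately have "A r j - X r j = (\<Sum>l<K. P $$ (l,j) * (D r l - D0 r l))"
          by (simp add: sum_subtractf algebra_simps)
        then have "\<bar>A r j - X r j\<bar> \<le> (\<Sum>l<K. \<bar>P $$ (l,j) * (D r l - D0 r l)\<bar>)"
          using sum_abs by (metis)
        also have "\<dots> \<le> (\<Sum>l<K. P $$ (l,j) * M l)"
        proof (intro sum_mono)
          fix l assume l: "l \<in> {..<K}"
          have p: "0 \<le> P $$ (l,j)" using Pnn l j by auto
          show "\<bar>P $$ (l,j) * (D r l - D0 r l)\<bar> \<le> P $$ (l,j) * M l"
            unfolding abs_mult using p Dbound[OF r, of l] l by (simp add: mult_left_mono)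
        qed
        finally show "\<bar>A r j - X r j\<bar> \<le> (\<Sum>l<K. P $$ (l,j) * M l)" .
      qed
      then show "M j \<le> (\<Sum>l<K. P $$ (l,j) * M l) + 0" by simp
    qed
    have "\<forall>j<K. M j \<le> 2 * 0 * v j" by (rule key[OF L Mfix]) simp
    then have Mi: "M i \<le> 0" using i by simp
    have "\<bar>A t i - X t i\<bar> \<le> 0" using Mup[of t i] t i Mi by auto
    moreover have "\<bar>D t i - D0 t i\<bar> \<le> 0" using Dbound[of t i] t i Mi by auto
    ultimately show ?thesis unfolding A0X by simp
  qed
  show ?thesis
    using A0DK D0DK GammaX PhiX uniq by blast
qed

end
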